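(* Let $r$ and $t$ be positive integers with $r\ge 3$ and $2\le t\le \frac{r+4}{4}$, and let $n=3r-t$. If $\rho_2(K(n,r))\ge 5$, then there exists a $2$-packing $S$ of $K(n,r)$ with $|S|=5$ such that $i_x(S)\le 2$ for every $x\in[n]$.
   Context: For integers $n\ge 2r$, the Kneser graph $K(n,r)$ has as vertices the $r$-element subsets of $[n]=\{1,\dots,n\}$, two vertices being adjacent iff they are disjoint. A $2$-packing of a graph $G$ is a set of vertices pairwise at distance at least $3$ in $G$; $\rho_2(G)$ is the maximum cardinality of a $2$-packing. For a set $S$ of vertices of $K(n,r)$ and $x\in[n]$, $i_x(S)=|\{u\in S: x\in u\}|$ is the number of vertices of $S$ containing $x$. *)

theory Defs
  imports Main "HOL-Library.Extended_Nat"
begin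

definition kneser_vertices :: "nat \<Rightarrow> nat \<Rightarrow> nat set set" where
  "kneser_vertices n r = {u. u \<subseteq> {1..n} \<and> card u = r}"

definition kneser_adj :: "nat \<Rightarrow> nat \<Rightarrow> nat set \<Rightarrow> nat set \<Rightarrow> bool" where
  "kneser_adj n r u v \<longleftrightarrow> u \<in> kneser_vertices n r \<and> v \<in> kneser_vertices n r
      \<and> u \<noteq> v \<and> u \<inter> v = {}"

definition kneser_walk :: "nat \<Rightarrow> nat \<Rightarrow> nat set list \<Rightarrow> bool" where
  "kneser_walk n r ws \<longleftrightarrow> ws \<noteq> [] \<and> set ws \<subseteq> kneser_vertices n r
      \<and> (\<forall>i. Suc i < length ws \<longrightarrow> kneser_adj n r (ws ! i) (ws ! Suc i))"

definition kneser_dist :: "nat \<Rightarrow> nat \<Rightarrow> nat set \<Rightarrow> nat set \<Rightarrow> enat" where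
  "kneser_dist n r u v =
     (if \<exists>ws. kneser_walk n r ws \<and> hd ws = u \<and> last ws = v
      then enat (LEAST k. \<exists>ws. kneser_walk n r ws \<and> hd ws = u \<and> last ws = v
                               \<and> length ws = Suc k)
      else \<infinity>)"

definition two_packing :: "nat \<Rightarrow> nat \<Rightarrow> nat set set \<Rightarrow> bool" where
  "two_packing n r S \<longleftrightarrow> S \<subseteq> kneser_vertices n r
      \<and> (\<forall>u\<in>S. \<forall>v\<in>S. u \<noteq> v \<longrightarrow> kneser_dist n r u v \<ge> 3)"

definition rho2 :: "nat \<Rightarrow> nat \<Rightarrow> nat" where
  "rho2 n r = Max {card S | S. two_packing n r S}"

definition i_x :: "nat \<Rightarrow> nat set set \<Rightarrow> nat" where
  "i_x x S = card {u \<in> S. x \<in> u}"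

end

theory Submission
  imports Defs
begin


lemma dist_le:
  assumes "kneser_walk n r ws" "hd ws = u" "last ws = v" "length ws = Suc k"
  shows "kneser_dist n r u v \<le> enat k"
proof -
  have ex: "\<exists>ws. kneser_walk n r ws \<and> hd ws = u \<and> last ws = v" using assms by blast
  have "(LEAST k. \<exists>ws. kneser_walk n r ws \<and> hd ws = u \<and> last ws = v \<and> length ws = Suc k) \<le> k"
    by (rule Least_le) (use assms in blast)
  then show ?thesis unfolding kneser_dist_def using ex by simp
qed

lemma packing_props:
  assumes "two_packing n r S" "u \<in> S" "v \<in> S" "u \<noteq> v" "0 < r"
  shows "u \<inter> v \<noteq> {} \<and> n < card (u \<union> v) + r"
proof -
  have uV: "u \<in> kneser_vertices n r" and vV: "v \<in> kneser_vertices n r"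
    using assms unfolding two_packing_def by auto
  have d3: "kneser_dist n r u v \<ge> 3" using assms unfolding two_packing_def by auto
  have c1: "u \<inter> v \<noteq> {}"
  proof
    assume e: "u \<inter> v = {}"
    have "kneser_walk n r [u, v]"
      using uV vV e assms(4) unfolding kneser_walk_def kneser_adj_def
      by (auto simp: less_Suc_eq)
    then have "kneser_dist n r u v \<le> enat 1" by (rule dist_le) auto
    with d3 have "(3::enat) \<le> enat 1" by (rule order_trans)
    then show False by (simp add: numeral_eq_enat)
  qed
  have c2: "n < card (u \<union> v) + r"
  proof (rule ccontr)
    assume "\<not> ?thesis"
    then have le: "card (u \<union> v) + r \<le> n" by simp
    have sub: "u \<union> v \<subseteq> {1..n}" using uV vV unfolding kneser_vertices_def by auto
    have "card ({1..n} - (u \<union> v)) = n - card (u \<union> v)"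
      using card_Diff_subset[OF finite_subset[OF sub] sub] by simp
    then have "r \<le> card ({1..n} - (u \<union> v))" using le by simp
    then obtain w where w: "w \<subseteq> {1..n} - (u \<union> v)" "card w = r" "finite w"
      by (rule obtain_subset_with_card_n)
    have wV: "w \<in> kneser_vertices n r" using w unfolding kneser_vertices_def by auto
    have une: "u \<noteq> {}" using uV assms(5) unfolding kneser_vertices_def by auto
    have vne: "v \<noteq> {}" using vV assms(5) unfolding kneser_vertices_def by auto
    have "w \<noteq> u" using w une by auto
    moreover have "w \<noteq> v" using w vne by auto
    ultimately have "kneser_walk n r [u, w, v]"
      using uV vV wV w unfolding kneser_walk_def kneser_adj_def
      by (auto simp: less_Suc_eq nth_Cons')
    then have "kneser_dist n r u v \<le> enat 2" by (rule dist_le) auto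
    with d3 have "(3::enat) \<le> enat 2" by (rule order_trans)
    then show False by (simp add: numeral_eq_enat)
  qed
  show ?thesis using c1 c2 by blast
qed

lemma dist_ge3:
  assumes uV: "u \<in> kneser_vertices n r" and vV: "v \<in> kneser_vertices n r"
    and "u \<noteq> v" "u \<inter> v \<noteq> {}" "n < card (u \<union> v) + r" and rpos: "0 < r"
  shows "3 \<le> kneser_dist n r u v"
proof (cases "\<exists>ws. kneser_walk n r ws \<and> hd ws = u \<and> last ws = v")
  case False
  have "kneser_dist n r u v = \<infinity>" unfolding kneser_dist_def by (rule if_not_P[OF False])
  then show ?thesis by simp
next
  case True
  then obtain ws0 where "kneser_walk n r ws0 \<and> hd ws0 = u \<and> last ws0 = v" by blast
  then have ex: "\<exists>k ws. kneser_walk n r ws \<and> hd ws = u \<and> last ws = v \<and> length ws = Suc k"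
    by (intro exI[of _ "length ws0 - 1"] exI[of _ ws0]) (auto simp: kneser_walk_def)
  define k where "k = (LEAST k. \<exists>ws. kneser_walk n r ws \<and> hd ws = u \<and> last ws = v \<and> length ws = Suc k)"
  obtain ws where ws: "kneser_walk n r ws" "hd ws = u" "last ws = v" "length ws = Suc k"
    using LeastI_ex[OF ex] unfolding k_def by blast
  have h0: "ws ! 0 = u" using ws by (simp add: hd_conv_nth kneser_walk_def)
  have hl: "ws ! k = v" using ws by (simp add: last_conv_nth kneser_walk_def)
  have "3 \<le> k"
  proof (rule ccontr)
    assume "\<not> 3 \<le> k"
    then have "k = 0 \<or> k = 1 \<or> k = 2" by auto
    moreover
    { assume "k = 0" then have False using h0 hl assms(3) by simp }
    moreover
    { assume k1: "k = 1"
      then have "kneser_adj n r (ws ! 0) (ws ! 1)" using ws unfolding kneser_walk_def by auto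
      then have False using h0 hl k1 assms(4) unfolding kneser_adj_def by simp }
    moreover
    { assume k2: "k = 2"
      have wa: "\<And>i. Suc i < length ws \<Longrightarrow> kneser_adj n r (ws ! i) (ws ! Suc i)"
        using ws(1) unfolding kneser_walk_def by blast
      have a1: "kneser_adj n r (ws ! 0) (ws ! 1)" using wa[of 0] k2 ws(4) by simp
      have a2: "kneser_adj n r (ws ! 1) (ws ! 2)" using wa[of 1] k2 ws(4) by (simp add: numeral_2_eq_2)
      define w where "w = ws ! 1"
      have wV: "w \<subseteq> {1..n}" "card w = r" using a1 unfolding w_def kneser_adj_def kneser_vertices_def by auto
      have "w \<subseteq> {1..n} - (u \<union> v)" using a1 a2 wV h0 hl k2 unfolding w_def kneser_adj_def by auto
      then have "card w \<le> card ({1..n} - (u \<union> v))" by (simp add: card_mono)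
      also have "\<dots> = n - card (u \<union> v)"
      proof -
        have sub: "u \<union> v \<subseteq> {1..n}" using uV vV unfolding kneser_vertices_def by auto
        then show ?thesis using card_Diff_subset[OF finite_subset[OF sub] sub] by simp
      qed
      finally have False using wV assms(5) rpos by arith }
    ultimately show False by blast
  qed
  then show ?thesis unfolding kneser_dist_def k_def[symmetric] using True by (simp add: numeral_eq_enat)
qed



definition K :: "nat \<Rightarrow> nat set" where
  "K i = {i, (i+4) mod 5, 5+i, 5+(i+3) mod 5, 10+i}"

definition blk :: "nat \<Rightarrow> nat \<Rightarrow> nat" where
  "blk i j = (if j = (i+1) mod 5 then i else if i = (j+1) mod 5 then j
              else if j = (i+2) mod 5 then 5+i else 5+j)"

lemma five_cases: "(i::nat) < 5 \<Longrightarrow> i = 0 \<or> i = 1 \<or> i = 2 \<or> i = 3 \<or> i = 4" by auto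

lemma K_int: "i < 5 \<Longrightarrow> j < 5 \<Longrightarrow> i \<noteq> j \<Longrightarrow> K i \<inter> K j = {blk i j} \<and> blk i j < 10"
  apply (drule five_cases)+
  apply (elim disjE)
  apply (simp_all add: K_def blk_def)
  done

lemma K_sub: "i < 5 \<Longrightarrow> K i \<subseteq> {..<15}"
  by (drule five_cases) (auto simp: K_def)

lemma K_sum: "i < 5 \<Longrightarrow> sum (g::nat\<Rightarrow>nat) (K i) = g i + g ((i+4) mod 5) + g (5+i) + g (5+(i+3) mod 5) + g (10+i)"
  by (drule five_cases) (auto simp: K_def add.assoc)

lemma K_mult: "k < 15 \<Longrightarrow> card {i. i < 5 \<and> k \<in> K i} \<le> 2"
proof -
  assume k: "k < 15"
  define c1 where "c1 = (if k<5 then k else if k<10 then k-5 else k-10)"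
  define c2 where "c2 = (if k<5 then (k+1) mod 5 else if k<10 then (k-3) mod 5 else k-10)"
  have "{i. i < 5 \<and> k \<in> K i} \<subseteq> {c1, c2}"
  proof
    fix i assume "i \<in> {i. i < 5 \<and> k \<in> K i}"
    then have "i < 5" "k \<in> K i" by auto
    then show "i \<in> {c1, c2}"
      apply -
      apply (drule five_cases)
      apply (elim disjE)
      apply (auto simp: K_def c1_def c2_def)
      done
  qed
  then have "card {i. i < 5 \<and> k \<in> K i} \<le> card {c1, c2}" by (rule card_mono[rotated]) simp
  also have "\<dots> \<le> 2" by (simp add: card_insert_le_m1)
  finally show ?thesis .
qed



lemma card_Un_ge:
  assumes "finite X" "finite Y"
  shows "card X + card Y \<le> card (X \<union> Y) + card (X \<inter> Y)"
  using card_Un_Int[OF assms] by simp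

lemma card_Int_Un_le: "finite Y \<Longrightarrow> card ((P \<union> Q) \<inter> Y) \<le> card (P \<inter> Y) + card (Q \<inter> Y)"
  by (metis Int_Un_distrib2 card_Un_le)

lemma bonf5:
  assumes fin: "finite A1" "finite A2" "finite A3" "finite A4" "finite A5"
    and c: "card A1 = r" "card A2 = r" "card A3 = r" "card A4 = r" "card A5 = r"
    and p: "card (A1 \<inter> A2) \<le> c" "card (A1 \<inter> A3) \<le> c" "card (A1 \<inter> A4) \<le> c" "card (A1 \<inter> A5) \<le> c"
           "card (A2 \<inter> A3) \<le> c" "card (A2 \<inter> A4) \<le> c" "card (A2 \<inter> A5) \<le> c"
           "card (A3 \<inter> A4) \<le> c" "card (A3 \<inter> A5) \<le> c" "card (A4 \<inter> A5) \<le> c"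
  shows "5 * r \<le> card (A1 \<union> A2 \<union> A3 \<union> A4 \<union> A5) + 10 * c"
proof -
  have s1: "card A1 + card A2 \<le> card (A1 \<union> A2) + card (A1 \<inter> A2)"
    using card_Un_ge[OF fin(1) fin(2)] .
  have s2: "card (A1 \<union> A2) + card A3 \<le> card (A1 \<union> A2 \<union> A3) + card ((A1 \<union> A2) \<inter> A3)"
    by (intro card_Un_ge) (use fin in auto)
  have s2': "card ((A1 \<union> A2) \<inter> A3) \<le> card (A1 \<inter> A3) + card (A2 \<inter> A3)"
    by (intro card_Int_Un_le) (use fin in auto)
  have s3: "card (A1 \<union> A2 \<union> A3) + card A4 \<le> card (A1 \<union> A2 \<union> A3 \<union> A4) + card ((A1 \<union> A2 \<union> A3) \<inter> A4)"
    by (intro card_Un_ge) (use fin in auto)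
  have s3': "card ((A1 \<union> A2 \<union> A3) \<inter> A4) \<le> card ((A1 \<union> A2) \<inter> A4) + card (A3 \<inter> A4)"
    by (intro card_Int_Un_le) (use fin in auto)
  have s3'': "card ((A1 \<union> A2) \<inter> A4) \<le> card (A1 \<inter> A4) + card (A2 \<inter> A4)"
    by (intro card_Int_Un_le) (use fin in auto)
  have s4: "card (A1 \<union> A2 \<union> A3 \<union> A4) + card A5 \<le> card (A1 \<union> A2 \<union> A3 \<union> A4 \<union> A5) + card ((A1 \<union> A2 \<union> A3 \<union> A4) \<inter> A5)"
    by (intro card_Un_ge) (use fin in auto)
  have s4': "card ((A1 \<union> A2 \<union> A3 \<union> A4) \<inter> A5) \<le> card ((A1 \<union> A2 \<union> A3) \<inter> A5) + card (A4 \<inter> A5)"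
    by (intro card_Int_Un_le) (use fin in auto)
  have s4'': "card ((A1 \<union> A2 \<union> A3) \<inter> A5) \<le> card ((A1 \<union> A2) \<inter> A5) + card (A3 \<inter> A5)"
    by (intro card_Int_Un_le) (use fin in auto)
  have s4''': "card ((A1 \<union> A2) \<inter> A5) \<le> card (A1 \<inter> A5) + card (A2 \<inter> A5)"
    by (intro card_Int_Un_le) (use fin in auto)
  show ?thesis using s1 s2 s2' s3 s3' s3'' s4 s4' s4'' s4''' c p by linarith
qed


theorem lemma4p7:
  fixes r t n :: nat
  assumes "r \<ge> 3" and "2 \<le> t" and "4 * t \<le> r + 4" and "n = 3 * r - t"
    and "rho2 n r \<ge> 5"
  shows "\<exists>S. two_packing n r S \<and> card S = 5 \<and> (\<forall>x\<in>{1..n}. i_x x S \<le> 2)"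
proof -
  have r0: "0 < r" using assms by simp
  have nt: "n + t = 3 * r" using assms by simp
  define C where "C = {card S | S. two_packing n r S}"
  have finC: "finite C"
  proof -
    have "C \<subseteq> {..card (Pow {1..n})}"
    proof
      fix c assume "c \<in> C"
      then obtain S where S: "two_packing n r S" "c = card S" unfolding C_def by blast
      have "S \<subseteq> Pow {1..n}" using S(1) unfolding two_packing_def kneser_vertices_def by auto
      then have "card S \<le> card (Pow {1..n})" by (intro card_mono) auto
      then show "c \<in> {..card (Pow {1..n})}" using S by simp
    qed
    then show ?thesis by (rule finite_subset) simp
  qed
  have "two_packing n r {}" unfolding two_packing_def by simp
  then have neC: "C \<noteq> {}" unfolding C_def by blast
  have "rho2 n r \<in> C" unfolding rho2_def C_def[symmetric] using finC neC by (rule Max_in)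
  then obtain S where S: "two_packing n r S" "card S = rho2 n r" unfolding C_def by (auto simp del: Max_in)
  then have "5 \<le> card S" using assms by simp
  then obtain T where T: "T \<subseteq> S" "card T = 5" "finite T" by (rule obtain_subset_with_card_n)
  from T(2) have "\<exists>A1 A2 A3 A4 A5. T = {A1,A2,A3,A4,A5} \<and> distinct [A1,A2,A3,A4,A5]"
    by (simp add: card_Suc_eq numeral_eq_Suc) blast
  then obtain A1 A2 A3 A4 A5 where T5: "T = {A1,A2,A3,A4,A5}" and dA: "distinct [A1,A2,A3,A4,A5]"
    by blast
  have pint: "card (u \<inter> v) \<le> t - 1" if "u \<in> S" "v \<in> S" "u \<noteq> v" for u v
  proof -
    have pp: "n < card (u \<union> v) + r" using packing_props[OF S(1) that r0] by blast
    have uV: "u \<in> kneser_vertices n r" "v \<in> kneser_vertices n r" using S(1) that unfolding two_packing_def by auto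
    then have fu: "finite u" "finite v" "card u = r" "card v = r"
      unfolding kneser_vertices_def by (auto intro: finite_subset)
    have "card u + card v = card (u \<union> v) + card (u \<inter> v)" using card_Un_Int fu by blast
    then show ?thesis using pp fu nt by linarith
  qed
  have AS: "A1 \<in> S" "A2 \<in> S" "A3 \<in> S" "A4 \<in> S" "A5 \<in> S" using T T5 by auto
  have AV: "A \<in> kneser_vertices n r" if "A \<in> S" for A using S(1) that unfolding two_packing_def by auto
  have Afin: "finite A" "card A = r" "A \<subseteq> {1..n}" if "A \<in> S" for A
    using AV[OF that] unfolding kneser_vertices_def by (auto intro: finite_subset)
  have "5 * r \<le> card (A1 \<union> A2 \<union> A3 \<union> A4 \<union> A5) + 10 * (t - 1)"
    apply (rule bonf5)
    using AS Afin pint dA by auto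
  moreover have "card (A1 \<union> A2 \<union> A3 \<union> A4 \<union> A5) \<le> n"
  proof -
    have "A1 \<union> A2 \<union> A3 \<union> A4 \<union> A5 \<subseteq> {1..n}" using AS Afin by auto
    then show ?thesis using card_mono[of "{1..n}"] by fastforce
  qed
  ultimately have tot: "5 * r \<le> n + 10 * (t - 1)" by linarith
  define p where "p = r - 4 * (t - 1)"
  have p4: "4 * (t - 1) + p = r" unfolding p_def using assms by simp
  define sz where "sz k = (if k < 10 then t - 1 else p)" for k :: nat
  define U where "U = (SIGMA k:{..<15}. {..<sz k})"
  have cardU: "card U = 10 * (t - 1) + 5 * p"
    unfolding U_def by (simp add: numeral_eq_Suc sz_def)
  have "card U \<le> card {1..n}" using cardU tot p4 by simp
  then obtain f where f: "f ` U \<subseteq> {1..n}" "inj_on f U"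
    using card_le_inj[of U "{1..n}"] unfolding U_def by auto
  define B where "B i = (SIGMA k:K i. {..<sz k})" for i
  define A where "A i = f ` B i" for i
  have BU: "B i \<subseteq> U" if "i < 5" for i using K_sub[OF that] unfolding B_def U_def by auto
  have cardA: "card (A i) = r" if "i < 5" for i
  proof -
    have "card (A i) = card (B i)" unfolding A_def
      by (rule card_image) (rule inj_on_subset[OF f(2) BU[OF that]])
    also have "\<dots> = sum sz (K i)" unfolding B_def by (simp add: K_def)
    also have "\<dots> = r"
    proof -
      have "(i+4) mod 5 < 10" "(i+3) mod 5 < 5" by simp_all
      then show ?thesis using K_sum[OF that, of sz] p4 that by (simp add: sz_def)
    qed
    finally show ?thesis .
  qed
  have AsubN: "A i \<subseteq> {1..n}" if "i < 5" for i using f BU[OF that] unfolding A_def by auto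
  have AVk: "A i \<in> kneser_vertices n r" if "i < 5" for i
    using cardA[OF that] AsubN[OF that] unfolding kneser_vertices_def by simp
  have cardInt: "card (A i \<inter> A j) = t - 1" if "i < 5" "j < 5" "i \<noteq> j" for i j
  proof -
    have "A i \<inter> A j = f ` (B i \<inter> B j)" unfolding A_def
      by (rule inj_on_image_Int[symmetric, OF f(2) BU BU]) (use that in auto)
    moreover have "B i \<inter> B j = (SIGMA k:{blk i j}. {..<sz k})"
      unfolding B_def Sigma_Int_distrib1[symmetric] using K_int[OF that] by simp
    moreover have "inj_on f (B i \<inter> B j)"
      by (rule inj_on_subset[OF f(2)]) (use BU[OF that(1)] in auto)
    ultimately have "card (A i \<inter> A j) = card (SIGMA k:{blk i j}. {..<sz k})"
      using card_image by metis
    also have "\<dots> = t - 1" using K_int[OF that] by (simp add: sz_def)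
    finally show ?thesis .
  qed
  have finA: "finite (A i)" for i unfolding A_def B_def by (simp add: K_def)
  have Aneq: "A i \<noteq> A j" if "i < 5" "j < 5" "i \<noteq> j" for i j
    using cardInt[OF that] cardA[OF that(1)] assms by auto
  define P where "P = A ` {..<5}"
  have injA: "inj_on A {..<5}" using Aneq by (auto simp: inj_on_def)
  have cardP: "card P = 5" unfolding P_def using card_image[OF injA] by simp
  have packP: "two_packing n r P"
    unfolding two_packing_def
  proof (intro conjI ballI impI)
    show "P \<subseteq> kneser_vertices n r" unfolding P_def using AVk by auto
  next
    fix u v assume uv: "u \<in> P" "v \<in> P" "u \<noteq> v"
    then obtain i j where ij: "i < 5" "j < 5" "u = A i" "v = A j" unfolding P_def by auto
    then have ij': "i \<noteq> j" using uv by auto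
    have ci: "card (A i \<inter> A j) = t - 1" by (rule cardInt[OF ij(1,2) ij'])
    have "card (A i) + card (A j) = card (A i \<union> A j) + card (A i \<inter> A j)"
      using card_Un_Int finA by blast
    then have "n < card (A i \<union> A j) + r" using ci cardA ij nt assms by simp
    moreover have "A i \<inter> A j \<noteq> {}" using ci assms by auto
    ultimately show "3 \<le> kneser_dist n r u v"
      using dist_ge3[OF AVk[OF ij(1)] AVk[OF ij(2)]] ij uv r0 by auto
  qed
  have ixP: "i_x x P \<le> 2" if "x \<in> {1..n}" for x
  proof -
    have "{u \<in> P. x \<in> u} = A ` {i. i < 5 \<and> x \<in> A i}" unfolding P_def by auto
    then have "i_x x P \<le> card {i. i < 5 \<and> x \<in> A i}" unfolding i_x_def
      by (simp add: card_image_le)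
    also have "\<dots> \<le> 2"
    proof (cases "x \<in> f ` U")
      case True
      then obtain e where e: "e \<in> U" "x = f e" by auto
      have "{i. i < 5 \<and> x \<in> A i} \<subseteq> {i. i < 5 \<and> fst e \<in> K i}"
      proof
        fix i assume "i \<in> {i. i < 5 \<and> x \<in> A i}"
        then have i: "i < 5" "x \<in> A i" by auto
        then obtain e' where e': "e' \<in> B i" "x = f e'" unfolding A_def by auto
        have "e' = e" using f(2) e e' BU[OF i(1)] by (auto simp: inj_on_def)
        then show "i \<in> {i. i < 5 \<and> fst e \<in> K i}" using e' i unfolding B_def by auto
      qed
      then have "card {i. i < 5 \<and> x \<in> A i} \<le> card {i. i < 5 \<and> fst e \<in> K i}"
        by (rule card_mono[rotated]) simp
      also have "\<dots> \<le> 2" using e(1) unfolding U_def by (intro K_mult) auto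
      finally show ?thesis .
    next
      case False
      have E: "{i. i < 5 \<and> x \<in> A i} = {}" using False BU unfolding A_def by auto
      show ?thesis unfolding E by simp
    qed
    finally show ?thesis .
  qed
  show ?thesis using packP cardP ixP by blast
qed

end
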